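(* Let $\kappa>1$. For every $n$ that is a power of $2$, $\tau_{2n}\le\tau_n^2$.
   Context: Fix $\kappa>1$. Define sequences indexed by powers of two: $z_1=1/\kappa$ and, for each power of two $n\ge1$, $z_{2n}=z_n\bigl(\xi+\sqrt{1+\xi^2}\bigr)$ with $\xi=1-z_n$. The Silver Convergence Rate is $\tau_n=\left(\frac{1-z_n}{1+z_n}\right)^2$. *)

theory Defs
  imports Complex_Main
begin

text \<open>The sequence z is indexed by powers of two: silver_z kappa k is z at n = 2^k.\<close>
fun silver_z :: "real \<Rightarrow> nat \<Rightarrow> real" where
  "silver_z kappa 0 = 1 / kappa"
| "silver_z kappa (Suc k) =
     (let z = silver_z kappa k; xi = 1 - z in z * (xi + sqrt (1 + xi ^ 2)))"

definition silver_tau :: "real \<Rightarrow> nat \<Rightarrow> real" where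
  "silver_tau kappa k = ((1 - silver_z kappa k) / (1 + silver_z kappa k)) ^ 2"

end

theory Submission
  imports Defs
begin

lemma sq_lb:
  fixes x :: real assumes "0 \<le> x" "x \<le> 1"
  shows "1 + x^2/2 - x^4/8 \<le> sqrt (1 + x^2)"
proof (rule real_le_rsqrt)
  define a where "a = x^2"
  have a: "0 \<le> a" "a \<le> 1" using assms by (auto simp: a_def power_le_one)
  have x4: "x^4 = a^2" by (simp add: a_def flip: power_mult)
  have e: "(1 + a/2 - a^2/8)^2 = 1 + a - a^3/8 + a^4/64"
    by (simp add: power2_eq_square algebra_simps eval_nat_numeral)
  have "a^4 \<le> a^3" using a by (simp add: power_decreasing)
  hence "(1 + a/2 - a^2/8)^2 \<le> 1 + a" unfolding e using a zero_le_power[OF a(1), of 3] by linarith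
  thus "(1 + x^2/2 - x^4/8)^2 \<le> 1 + x^2" unfolding x4 a_def .
qed

lemma step:
  fixes z :: real assumes "0 < z" "z \<le> 1"
  shows "z \<le> z * ((1-z) + sqrt (1 + (1-z)^2))"
    and "z * ((1-z) + sqrt (1 + (1-z)^2)) \<le> 1"
    and "(1 - z * ((1-z) + sqrt (1 + (1-z)^2))) / (1 + z * ((1-z) + sqrt (1 + (1-z)^2)))
         \<le> ((1-z)/(1+z))^2"
proof -
  define x where "x = 1 - z"
  define s where "s = sqrt (1 + x^2)"
  have x0: "0 \<le> x" "x < 1" using assms x_def by auto
  have s1: "1 \<le> s" unfolding s_def by simp
  have ss: "s^2 = 1 + x^2" unfolding s_def by simp
  have zx: "z = 1 - x" using x_def by simp
  show "z \<le> z * ((1-z) + sqrt (1 + (1-z)^2))"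
  proof -
    have "1 \<le> x + s" using s1 x0 by linarith
    hence "z * 1 \<le> z * (x + s)" using assms by (intro mult_left_mono) auto
    thus ?thesis unfolding s_def x_def by simp
  qed
  have "s \<le> (1 - x + x^2)/(1-x)"
  proof -
    have "s * (1-x) \<le> 1 - x + x^2"
    proof (rule power2_le_imp_le)
      have "(s*(1-x))^2 = (1+x^2)*(1-x)^2" by (simp add: power_mult_distrib ss)
      also have "\<dots> \<le> (1 - x + x^2)^2" by (simp add: power2_eq_square algebra_simps)
      finally show "(s*(1-x))^2 \<le> (1 - x + x^2)^2" .
      show "0 \<le> 1 - x + x^2" using x0 by (smt (verit) zero_le_power2)
    qed
    thus ?thesis using x0 by (simp add: pos_le_divide_eq)
  qed
  hence "(1-x) * (x + s) \<le> 1" using x0 by (simp add: pos_divide_le_eq algebra_simps divide_simps power2_eq_square)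
  thus "z * ((1-z) + sqrt (1 + (1-z)^2)) \<le> 1" unfolding s_def x_def[symmetric] zx by simp
  have lb: "1 + x^2/2 - x^4/8 \<le> s" unfolding s_def using sq_lb x0 by simp
  have q: "0 < 2 - 2*x + x^2" using x0 by (smt (verit) zero_le_power2)
  have "(x + (1 + x^2/2 - x^4/8)) * (2 - 2*x + x^2) = 2 + x^4/4 + x^5/4 - x^6/8"
    by (simp add: field_simps eval_nat_numeral)
  moreover have "x^6 \<le> x^5" "0 \<le> x^4" "0 \<le> x^5" using x0
    by (auto simp: power_decreasing[of 5 6 x, simplified])
  ultimately have key: "2 \<le> (x + s) * (2 - 2*x + x^2)"
    using mult_right_mono[OF add_left_mono[OF lb, of x] less_imp_le[OF q]] by linarith
  define w where "w = (1-x)*(x+s)"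
  have w0: "0 < w" using x0 s1 w_def by simp
  have "(1 - w) * (1+z)^2 \<le> (1-z)^2 * (1 + w)"
  proof -
    have "(1+z)^2 - (1-z)^2 = 4*z" by (simp add: power2_eq_square algebra_simps)
    have "4*z \<le> w * ((1+z)^2 + (1-z)^2)"
    proof -
      have "(1+z)^2 + (1-z)^2 = 2*(2 - 2*x + x^2)" unfolding zx by (simp add: power2_eq_square algebra_simps)
      hence "w * ((1+z)^2 + (1-z)^2) = 2*z*((x+s)*(2 - 2*x + x^2))" unfolding w_def zx[symmetric] by simp
      moreover have "2*z*2 \<le> 2*z*((x+s)*(2 - 2*x + x^2))" using key assms by simp
      ultimately show ?thesis by simp
    qed
    thus ?thesis using \<open>(1+z)^2 - (1-z)^2 = 4*z\<close> by (simp add: algebra_simps)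
  qed
  hence "(1 - w) / (1 + w) \<le> (1-z)^2 / (1+z)^2" using w0 assms
    by (simp add: divide_simps)
  thus "(1 - z * ((1-z) + sqrt (1 + (1-z)^2))) / (1 + z * ((1-z) + sqrt (1 + (1-z)^2)))
         \<le> ((1-z)/(1+z))^2" unfolding w_def s_def x_def[symmetric] zx by (simp add: power_divide)
qed

lemma zbounds: assumes "kappa > 1" shows "0 < silver_z kappa k \<and> silver_z kappa k \<le> 1"
proof (induction k)
  case 0 then show ?case using assms by simp
next
  case (Suc k)
  then show ?case using step(1,2)[of "silver_z kappa k"] by (auto simp: Let_def)
qed

theorem mainTheorem8:
  fixes kappa :: real and k :: nat
  assumes "kappa > 1"
  shows "silver_tau kappa (Suc k) \<le> (silver_tau kappa k) ^ 2"
proof -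
  define z where "z = silver_z kappa k"
  have zb: "0 < z" "z \<le> 1" using zbounds[OF assms] z_def by auto
  define z' where "z' = silver_z kappa (Suc k)"
  have z': "z' = z * ((1-z) + sqrt (1 + (1-z)^2))" by (simp add: z'_def z_def Let_def)
  have b: "z' \<le> 1" "0 < z'" using zbounds[OF assms, of "Suc k"] z'_def by auto
  have r: "(1 - z')/(1+z') \<le> ((1-z)/(1+z))^2" using step(3)[OF zb] z' by simp
  have "0 \<le> (1 - z')/(1+z')" using b by simp
  hence "((1 - z')/(1+z'))^2 \<le> (((1-z)/(1+z))^2)^2" by (rule power_mono[OF r])
  thus ?thesis unfolding silver_tau_def z_def[symmetric] z'_def[symmetric] by simp
qed

end
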